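(* Let $1\le p<\infty$ and let $w$ be a weight on $\mathbb{R}^n$. The following are equivalent: (i) $M_0$ is bounded from $\mathcal M^{p}(\varphi,w)$ to $W\mathcal M^{p}(\varphi,w)$; (ii) $w\in A_{0}(\mathcal M^{p}(\varphi))$; (iii) $M_0$ is bounded on $\mathcal M^{p}(\varphi,w)$. Moreover, the operator norm of $M_0$ in (i) and in (iii) is comparable to $[w]_{A_{0}(\mathcal M^{p}(\varphi))}$, with constants independent of $w$.
   Context: A weight is a nonnegative locally integrable function on $\mathbb{R}^n$. Let $\varphi$ be a function from the set of Euclidean balls of $\mathbb{R}^n$ to $(0,\infty)$; standing assumptions: $\varphi$ is doubling ($\varphi(2B)\le C\varphi(B)$) and reverse doubling (there are $\delta>0$, $C$ with $\varphi(B_1)/\varphi(B_2)\le C(|B_1|/|B_2|)^\delta$ for balls $B_1\subset B_2$), and characteristic functions of balls belong to $\mathcal M^{p}(\varphi,w)$. $\mathcal M^{p}(\varphi,w)$ is the space of measurable $f$ with $\|f\|_{\mathcal M^{p}(\varphi,w)}:=\sup_B\big(\varphi(B)^{-1}\int_B|f|^pw\big)^{1/p}<\infty$ (supremum over all balls); $W\mathcal M^{p}(\varphi,w)$ is defined by $\|f\|_{W\mathcal M^{p}(\varphi,w)}:=\sup_B\sup_{t>0} t\, w(\{x\in B:|f(x)|>t\})^{1/p}\varphi(B)^{-1/p}<\infty$. Köthe dual: $\|g\|_{X'}:=\sup\{\int|fg|:\|f\|_X\le1\}$. $M_0f(x):=\sup_{r>|x|}|B(0,r)|^{-1}\int_{|y|<r}|f(y)|\,dy$.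 $[w]_{A_{0}(\mathcal M^{p}(\varphi))}:=\sup_B\|\chi_B\|_{\mathcal M^{p}(\varphi,w)}\|\chi_B\|_{\mathcal M^{p}(\varphi,w)'}/|B|$ with the supremum over balls $B$ centered at the origin; $A_0(\mathcal M^{p}(\varphi))$ is the class of weights with this finite. *)

theory Defs
  imports "HOL-Analysis.Analysis"
begin

definition epowr :: "ennreal \<Rightarrow> real \<Rightarrow> ennreal" where
  "epowr x a = (if x = \<infinity> then \<infinity> else ennreal (enn2real x powr a))"

definition is_ball :: "'a::euclidean_space set \<Rightarrow> bool" where
  "is_ball B \<longleftrightarrow> (\<exists>x r. r > 0 \<and> B = ball x r)"

definition admissible_phi :: "('a::euclidean_space set \<Rightarrow> real) \<Rightarrow> bool" where
  "admissible_phi \<phi> \<longleftrightarrow>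
     (\<forall>B. is_ball B \<longrightarrow> \<phi> B > 0) \<and>
     (\<exists>C. \<forall>x r. r > 0 \<longrightarrow> \<phi> (ball x (2 * r)) \<le> C * \<phi> (ball x r)) \<and>
     (\<exists>\<delta> C. \<delta> > 0 \<and> (\<forall>B1 B2. is_ball B1 \<longrightarrow> is_ball B2 \<longrightarrow> B1 \<subseteq> B2 \<longrightarrow>
          \<phi> B1 / \<phi> B2 \<le> C * (measure lebesgue B1 / measure lebesgue B2) powr \<delta>))"

definition weight :: "('a::euclidean_space \<Rightarrow> real) \<Rightarrow> bool" where
  "weight w \<longleftrightarrow> (\<forall>x. 0 \<le> w x) \<and> w \<in> borel_measurable lebesgue \<and>
     (\<forall>K. compact K \<longrightarrow> (\<integral>\<^sup>+ x\<in>K. ennreal (w x) \<partial>lebesgue) < \<infinity>)"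

definition wint :: "real \<Rightarrow> ('a::euclidean_space \<Rightarrow> real) \<Rightarrow> ('a \<Rightarrow> ennreal) \<Rightarrow> 'a set \<Rightarrow> ennreal" where
  "wint p w g B = (\<integral>\<^sup>+ x\<in>B. epowr (g x) p * ennreal (w x) \<partial>lebesgue)"

definition morrey_norm :: "real \<Rightarrow> ('a::euclidean_space set \<Rightarrow> real) \<Rightarrow> ('a \<Rightarrow> real) \<Rightarrow> ('a \<Rightarrow> ennreal) \<Rightarrow> ennreal" where
  "morrey_norm p \<phi> w g = (SUP B\<in>{B. is_ball B}. epowr (ennreal (1 / \<phi> B) * wint p w g B) (1 / p))"

definition weak_morrey_norm :: "real \<Rightarrow> ('a::euclidean_space set \<Rightarrow> real) \<Rightarrow> ('a \<Rightarrow> real) \<Rightarrow> ('a \<Rightarrow> ennreal) \<Rightarrow> ennreal" where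
  "weak_morrey_norm p \<phi> w g = (SUP (B, t)\<in>{(B, t). is_ball B \<and> t > 0}.
      ennreal t * epowr (\<integral>\<^sup>+ x\<in>{x\<in>B. g x > ennreal t}. ennreal (w x) \<partial>lebesgue) (1 / p)
      * ennreal (\<phi> B powr (- 1 / p)))"

definition in_morrey :: "real \<Rightarrow> ('a::euclidean_space set \<Rightarrow> real) \<Rightarrow> ('a \<Rightarrow> real) \<Rightarrow> ('a \<Rightarrow> real) \<Rightarrow> bool" where
  "in_morrey p \<phi> w f \<longleftrightarrow> f \<in> borel_measurable lebesgue \<and>
     morrey_norm p \<phi> w (\<lambda>x. ennreal \<bar>f x\<bar>) < \<infinity>"

definition morrey_dual_norm :: "real \<Rightarrow> ('a::euclidean_space set \<Rightarrow> real) \<Rightarrow> ('a \<Rightarrow> real) \<Rightarrow> ('a \<Rightarrow> real) \<Rightarrow> ennreal" where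
  "morrey_dual_norm p \<phi> w g = (SUP f\<in>{f. in_morrey p \<phi> w f \<and> morrey_norm p \<phi> w (\<lambda>x. ennreal \<bar>f x\<bar>) \<le> 1}.
      \<integral>\<^sup>+ x. ennreal \<bar>f x * g x\<bar> \<partial>lebesgue)"

definition M0 :: "('a::euclidean_space \<Rightarrow> real) \<Rightarrow> 'a \<Rightarrow> ennreal" where
  "M0 f x = (SUP r\<in>{r. r > norm x}.
      ennreal (1 / measure lebesgue (ball (0::'a) r)) * (\<integral>\<^sup>+ y\<in>ball 0 r. ennreal \<bar>f y\<bar> \<partial>lebesgue))"

definition A0_const :: "real \<Rightarrow> ('a::euclidean_space set \<Rightarrow> real) \<Rightarrow> ('a \<Rightarrow> real) \<Rightarrow> ennreal" where
  "A0_const p \<phi> w = (SUP r\<in>{r::real. r > 0}.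
      morrey_norm p \<phi> w (\<lambda>x. ennreal (indicator (ball (0::'a) r) x))
      * morrey_dual_norm p \<phi> w (indicator (ball 0 r))
      / emeasure lebesgue (ball (0::'a) r))"

definition M0_norm_weak :: "real \<Rightarrow> ('a::euclidean_space set \<Rightarrow> real) \<Rightarrow> ('a \<Rightarrow> real) \<Rightarrow> ennreal" where
  "M0_norm_weak p \<phi> w = Inf {K. \<forall>f. in_morrey p \<phi> w f \<longrightarrow>
      weak_morrey_norm p \<phi> w (M0 f) \<le> K * morrey_norm p \<phi> w (\<lambda>x. ennreal \<bar>f x\<bar>)}"

definition M0_norm_strong :: "real \<Rightarrow> ('a::euclidean_space set \<Rightarrow> real) \<Rightarrow> ('a \<Rightarrow> real) \<Rightarrow> ennreal" where
  "M0_norm_strong p \<phi> w = Inf {K. \<forall>f. in_morrey p \<phi> w f \<longrightarrow>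
      morrey_norm p \<phi> w (M0 f) \<le> K * morrey_norm p \<phi> w (\<lambda>x. ennreal \<bar>f x\<bar>)}"

definition M0_bounded_weak :: "real \<Rightarrow> ('a::euclidean_space set \<Rightarrow> real) \<Rightarrow> ('a \<Rightarrow> real) \<Rightarrow> bool" where
  "M0_bounded_weak p \<phi> w \<longleftrightarrow> (\<exists>K::real. \<forall>f. in_morrey p \<phi> w f \<longrightarrow>
      weak_morrey_norm p \<phi> w (M0 f) \<le> ennreal K * morrey_norm p \<phi> w (\<lambda>x. ennreal \<bar>f x\<bar>))"

definition M0_bounded_strong :: "real \<Rightarrow> ('a::euclidean_space set \<Rightarrow> real) \<Rightarrow> ('a \<Rightarrow> real) \<Rightarrow> bool" where
  "M0_bounded_strong p \<phi> w \<longleftrightarrow> (\<exists>K::real. \<forall>f. in_morrey p \<phi> w f \<longrightarrow>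
      morrey_norm p \<phi> w (M0 f) \<le> ennreal K * morrey_norm p \<phi> w (\<lambda>x. ennreal \<bar>f x\<bar>))"

definition in_A0 :: "real \<Rightarrow> ('a::euclidean_space set \<Rightarrow> real) \<Rightarrow> ('a \<Rightarrow> real) \<Rightarrow> bool" where
  "in_A0 p \<phi> w \<longleftrightarrow> A0_const p \<phi> w < \<infinity>"

end

theory Submission imports Defs begin

lemma epowr_ennreal: "0 \<le> x \<Longrightarrow> epowr (ennreal x) q = ennreal (x powr q)"
  by (simp add: epowr_def)

lemma epowr_top[simp]: "epowr top q = top"
  by (simp add: epowr_def)

lemma epowr_0[simp]: "epowr 0 q = 0"
  by (simp add: epowr_def)

lemma epowr_1[simp]: "epowr 1 q = 1"
  by (simp add: epowr_def)

lemma epowr_eq_0_iff: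
  assumes "q > 0"
  shows "epowr a q = 0 \<longleftrightarrow> a = 0"
proof (cases "a = top")
  case True then show ?thesis by simp
next
  case False
  then obtain x where x: "a = ennreal x" "x \<ge> 0" by (metis ennreal_cases)
  have "ennreal (x powr q) = 0 \<longleftrightarrow> x = 0"
    using x(2) by (simp add: ennreal_eq_0_iff)
  then show ?thesis using x by (simp add: epowr_ennreal)
qed

lemma epowr_mult:
  assumes "q > 0"
  shows "epowr (a * b) q = epowr a q * epowr b q"
proof (cases "a = top \<or> b = top")
  case True
  then show ?thesis
  proof
    assume a: "a = top"
    show ?thesis
    proof (cases "b = 0")
      case True then show ?thesis using a by simp
    next
      case False
      then have "epowr b q \<noteq> 0" using epowr_eq_0_iff[OF assms] by simp
      then show ?thesis using a False by (simp add: ennreal_top_mult)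
    qed
  next
    assume b: "b = top"
    show ?thesis
    proof (cases "a = 0")
      case True then show ?thesis using b by simp
    next
      case False
      then have "epowr a q \<noteq> 0" using epowr_eq_0_iff[OF assms] by simp
      then show ?thesis using b False by (simp add: ennreal_mult_top)
    qed
  qed
next
  case False
  then obtain x y where xy: "a = ennreal x" "b = ennreal y" "x \<ge> 0" "y \<ge> 0"
    by (metis ennreal_cases)
  then have "a * b = ennreal (x * y)" by (simp add: ennreal_mult)
  then have "epowr (a * b) q = ennreal ((x*y) powr q)"
    using xy by (simp add: epowr_ennreal)
  also have "\<dots> = ennreal (x powr q) * ennreal (y powr q)"
    using xy by (simp add: powr_mult ennreal_mult)
  finally show ?thesis using xy by (simp add: epowr_ennreal)
qed

lemma epowr_inv:
  assumes "q > 0"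
  shows "epowr (epowr a q) (1 / q) = a"
proof (cases "a = top")
  case True then show ?thesis by simp
next
  case False
  then obtain x where "a = ennreal x" "x \<ge> 0" by (metis ennreal_cases)
  then show ?thesis using assms
    by (simp add: epowr_ennreal powr_powr)
qed

lemma epowr_mono:
  assumes "q > 0" "a \<le> b"
  shows "epowr a q \<le> epowr b q"
proof (cases "b = top")
  case True then show ?thesis by simp
next
  case False
  then obtain y where y: "b = ennreal y" "y \<ge> 0" by (metis ennreal_cases)
  have "a \<noteq> top" using assms(2) False top.extremum_uniqueI by blast
  then obtain x where x: "a = ennreal x" "x \<ge> 0" by (metis ennreal_cases)
  have "x \<le> y" using x y assms(2) by simp
  then show ?thesis using x y assms
    by (simp add: epowr_ennreal powr_mono2)
qed

lemma epowr_le_iff: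
  assumes "q > 0"
  shows "epowr a q \<le> epowr b q \<longleftrightarrow> a \<le> b"
proof
  assume "epowr a q \<le> epowr b q"
  then have "epowr (epowr a q) (1/q) \<le> epowr (epowr b q) (1/q)"
    using epowr_mono[of "1/q"] assms by simp
  then show "a \<le> b" using epowr_inv[OF assms] by simp
qed (rule epowr_mono[OF assms])


lemma open_sets_lebesgue: "open S \<Longrightarrow> S \<in> sets lebesgue"
  by (simp add: sets_completionI_sets borel_open)

lemma ball_lebesgue[measurable]: "ball c r \<in> sets lebesgue"
  by (simp add: open_sets_lebesgue)

lemma is_ball_ball[simp]: "is_ball (ball x r) \<longleftrightarrow> r > 0"
proof
  assume "is_ball (ball x r)"
  then obtain y s where "s > 0" "ball x r = ball y s" unfolding is_ball_def by blast
  then have "y \<in> ball x r" by simp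
  then show "r > 0" by (metis ball_empty empty_iff not_less)
qed (auto simp: is_ball_def)

lemma ball_sets_lebesgue: "is_ball B \<Longrightarrow> B \<in> sets lebesgue"
  by (auto simp: is_ball_def open_sets_lebesgue)

lemma pow_powr: "a > 0 \<Longrightarrow> ((a::real) ^ k) powr d = (a powr d) ^ k"
proof -
  assume a: "a > 0"
  have "(a ^ k) powr d = (a powr real k) powr d" using a by (simp add: powr_realpow)
  also have "\<dots> = a powr (real k * d)" by (simp add: powr_powr)
  also have "\<dots> = (a powr d) powr real k" by (simp add: powr_powr mult.commute)
  also have "\<dots> = (a powr d) ^ k" using a by (simp add: powr_realpow)
  finally show ?thesis .
qed

lemma AE_lebesgue_ne: "AE x in lebesgue. x \<noteq> (c::'a::euclidean_space)"
  by (rule AE_completion) (rule AE_lborel_singleton)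

lemma vol_ball_eq:
  "r \<ge> 0 \<Longrightarrow> measure lebesgue (ball (c::'a::euclidean_space) r) = r ^ DIM('a) * measure lebesgue (ball (0::'a) 1)"
  using content_ball_conv_unit_ball[of r c] by simp

lemma vol_ball_pos: "r > 0 \<Longrightarrow> measure lebesgue (ball (c::'a::euclidean_space) r) > 0"
  using content_ball_pos[of r c] by simp

lemma emeasure_ball_eq: "emeasure lebesgue (ball c r) = ennreal (measure lebesgue (ball c r))"
  by (rule emeasure_eq_measure2) (simp add: lmeasurable_ball)

lemma measurable_epowr[measurable]:
  assumes [measurable]: "g \<in> borel_measurable M"
  shows "(\<lambda>x. epowr (g x) q) \<in> borel_measurable M"
  unfolding epowr_def by measurable

lemma M0_open: "open {x::'a::euclidean_space. t < M0 f x}"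
proof -
  define av where "av r = ennreal (1 / measure lebesgue (ball (0::'a) r)) *
          (\<integral>\<^sup>+ y\<in>ball 0 r. ennreal \<bar>f y\<bar> \<partial>lebesgue)" for r
  have "M0 f x = (SUP r\<in>{r. r > norm x}. av r)" for x unfolding M0_def av_def by simp
  then have "{x::'a. t < M0 f x} = (\<Union>r\<in>{r. t < av r}. ball 0 r)"
    by (auto simp: less_SUP_iff)
  then show ?thesis by (simp add: open_UN)
qed

lemma M0_measurable[measurable]: "M0 f \<in> borel_measurable lebesgue"
  by (rule borel_measurableI_greater) (simp add: open_sets_lebesgue M0_open)

lemma mult_inv_le_iff:
  assumes "c > 0"
  shows "ennreal (1 / c) * I \<le> E \<longleftrightarrow> I \<le> E * ennreal c"
proof
  assume h: "ennreal (1 / c) * I \<le> E"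
  have "I = ennreal (1 / c) * I * ennreal c"
    using assms by (simp add: ennreal_mult[symmetric] mult.commute mult.left_commute)
  also have "\<dots> \<le> E * ennreal c" using h by (intro mult_right_mono) auto
  finally show "I \<le> E * ennreal c" .
next
  assume h: "I \<le> E * ennreal c"
  have "ennreal (1 / c) * I \<le> ennreal (1 / c) * (E * ennreal c)" using h by (intro mult_left_mono) auto
  also have "\<dots> = E"
    using assms by (simp add: ennreal_mult[symmetric] mult.commute mult.left_commute)
  finally show "ennreal (1 / c) * I \<le> E" .
qed

lemma epowr_le_K_iff:
  assumes "p > 0"
  shows "epowr a (1/p) \<le> K \<longleftrightarrow> a \<le> epowr K p"
proof -
  have "K = epowr (epowr K p) (1/p)" using epowr_inv[OF assms] by simp
  then have "epowr a (1/p) \<le> K \<longleftrightarrow> epowr a (1/p) \<le> epowr (epowr K p) (1/p)" by simp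
  also have "\<dots> \<longleftrightarrow> a \<le> epowr K p" using assms by (intro epowr_le_iff) simp
  finally show ?thesis .
qed

lemma epowr_inv2:
  assumes "p > 0"
  shows "epowr (epowr a (1/p)) p = a"
  using epowr_inv[of "1/p" a] assms by simp

lemma norm_le_iff:
  assumes "p > 0" "\<And>B. is_ball B \<Longrightarrow> \<phi> B > 0"
  shows "morrey_norm p \<phi> w g \<le> K \<longleftrightarrow> (\<forall>B. is_ball B \<longrightarrow> wint p w g B \<le> epowr K p * ennreal (\<phi> B))"
  unfolding morrey_norm_def
  by (simp add: SUP_le_iff epowr_le_K_iff[OF assms(1)] mult_inv_le_iff assms(2))

lemma norm_ge:
  "is_ball B \<Longrightarrow> epowr (ennreal (1 / \<phi> B) * wint p w g B) (1 / p) \<le> morrey_norm p \<phi> w g"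
  unfolding morrey_norm_def by (rule SUP_upper) simp


lemma wint_indicator:
  assumes "p > 0"
  shows "wint p w (\<lambda>x. ennreal (indicator S x)) B = (\<integral>\<^sup>+ x\<in>B \<inter> S. ennreal (w x) \<partial>lebesgue)"
  unfolding wint_def
proof (intro nn_integral_cong)
  fix x
  show "epowr (ennreal (indicator S x)) p * ennreal (w x) * indicator B x =
     ennreal (w x) * indicator (B \<inter> S) x"
    by (auto split: split_indicator)
qed

lemma ennreal_abs_cmult: "c \<ge> 0 \<Longrightarrow> ennreal \<bar>c * y\<bar> = ennreal c * ennreal \<bar>y\<bar>"
  by (simp add: abs_mult ennreal_mult)

lemma ennreal_abs_indicator: "ennreal \<bar>g x * indicator S x\<bar> = ennreal \<bar>g x\<bar> * indicator S x"
  by (auto split: split_indicator)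

context
  fixes p :: real and \<phi> :: "'a::euclidean_space set \<Rightarrow> real" and w :: "'a \<Rightarrow> real"
  assumes p1: "1 \<le> p" and phipos: "\<And>B. is_ball B \<Longrightarrow> \<phi> B > 0" and wt: "weight w"
begin

lemma p0: "p > 0" using p1 by simp

lemma w_meas[measurable]: "w \<in> borel_measurable lebesgue"
  using wt by (simp add: weight_def)

lemma norm_scale:
  assumes c: "c \<ge> 0" and g[measurable]: "g \<in> borel_measurable lebesgue"
  shows "morrey_norm p \<phi> w (\<lambda>x. ennreal c * g x) = ennreal c * morrey_norm p \<phi> w g"
proof -
  have wi: "wint p w (\<lambda>x. ennreal c * g x) B = epowr (ennreal c) p * wint p w g B" if B: "is_ball B" for B
  proof -
    have [measurable]: "B \<in> sets lebesgue" using B by (rule ball_sets_lebesgue)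
    have "wint p w (\<lambda>x. ennreal c * g x) B =
        (\<integral>\<^sup>+ x. epowr (ennreal c) p * (epowr (g x) p * ennreal (w x) * indicator B x) \<partial>lebesgue)"
      unfolding wint_def by (intro nn_integral_cong) (simp add: epowr_mult[OF p0] mult.assoc)
    also have "\<dots> = epowr (ennreal c) p * wint p w g B"
      unfolding wint_def by (rule nn_integral_cmult) measurable
    finally show ?thesis .
  qed
  have "epowr (ennreal (1 / \<phi> B) * wint p w (\<lambda>x. ennreal c * g x) B) (1 / p) =
        ennreal c * epowr (ennreal (1 / \<phi> B) * wint p w g B) (1 / p)" if B: "is_ball B" for B
  proof -
    have "ennreal (1 / \<phi> B) * wint p w (\<lambda>x. ennreal c * g x) B =
          epowr (ennreal c) p * (ennreal (1 / \<phi> B) * wint p w g B)"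
      by (simp add: wi[OF B] mult.assoc mult.left_commute)
    then show ?thesis
      using p0 by (simp add: epowr_mult epowr_inv)
  qed
  then show ?thesis
    unfolding morrey_norm_def SUP_mult_left_ennreal by (intro SUP_cong) auto
qed

lemma in_morrey_scale:
  assumes c: "c \<ge> 0" and f: "in_morrey p \<phi> w f"
  shows "in_morrey p \<phi> w (\<lambda>x. c * f x)"
    and "morrey_norm p \<phi> w (\<lambda>x. ennreal \<bar>c * f x\<bar>) = ennreal c * morrey_norm p \<phi> w (\<lambda>x. ennreal \<bar>f x\<bar>)"
proof -
  have fm[measurable]: "f \<in> borel_measurable lebesgue" using f by (simp add: in_morrey_def)
  show eq: "morrey_norm p \<phi> w (\<lambda>x. ennreal \<bar>c * f x\<bar>) = ennreal c * morrey_norm p \<phi> w (\<lambda>x. ennreal \<bar>f x\<bar>)"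
    using norm_scale[OF c, of "\<lambda>x. ennreal \<bar>f x\<bar>"] c by (simp add: ennreal_abs_cmult)
  show "in_morrey p \<phi> w (\<lambda>x. c * f x)"
    using f unfolding in_morrey_def eq by (auto simp: ennreal_mult_less_top)
qed

lemma dual_ge:
  assumes "in_morrey p \<phi> w g" "morrey_norm p \<phi> w (\<lambda>x. ennreal \<bar>g x\<bar>) \<le> 1"
  shows "(\<integral>\<^sup>+ y\<in>S. ennreal \<bar>g y\<bar> \<partial>lebesgue) \<le> morrey_dual_norm p \<phi> w (indicator S)"
proof -
  have "(\<integral>\<^sup>+ y\<in>S. ennreal \<bar>g y\<bar> \<partial>lebesgue) = (\<integral>\<^sup>+ x. ennreal \<bar>g x * indicator S x\<bar> \<partial>lebesgue)"
    by (intro nn_integral_cong) (simp add: ennreal_abs_indicator)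
  also have "\<dots> \<le> morrey_dual_norm p \<phi> w (indicator S)"
    unfolding morrey_dual_norm_def using assms by (intro SUP_upper) auto
  finally show ?thesis .
qed

lemma A0_ge:
  assumes r: "r > 0"
  shows "morrey_norm p \<phi> w (\<lambda>x. ennreal (indicator (ball 0 r) x)) * morrey_dual_norm p \<phi> w (indicator (ball 0 r))
      \<le> A0_const p \<phi> w * ennreal (measure lebesgue (ball (0::'a) r))"
proof -
  let ?X = "morrey_norm p \<phi> w (\<lambda>x. ennreal (indicator (ball 0 r) x)) * morrey_dual_norm p \<phi> w (indicator (ball 0 r))"
  let ?m = "ennreal (measure lebesgue (ball (0::'a) r))"
  have m0: "?m \<noteq> 0" "?m < top" using vol_ball_pos[OF r, of "0::'a"] by auto
  have "?X / ?m \<le> A0_const p \<phi> w"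
    unfolding A0_const_def emeasure_ball_eq using r by (intro SUP_upper2[of r]) auto
  then have "?X / ?m * ?m \<le> A0_const p \<phi> w * ?m" by (rule mult_right_mono) simp
  moreover have "?X / ?m * ?m = ?X"
    using m0 by (simp add: ennreal_divide_times ennreal_divide_self)
  ultimately show ?thesis by simp
qed

lemma key_avg:
  assumes A0fin: "A0_const p \<phi> w < top" and f: "in_morrey p \<phi> w f" and r: "r > 0"
  shows "morrey_norm p \<phi> w (\<lambda>x. ennreal (indicator (ball 0 r) x)) * (\<integral>\<^sup>+ y\<in>ball 0 r. ennreal \<bar>f y\<bar> \<partial>lebesgue)
    \<le> A0_const p \<phi> w * ennreal (measure lebesgue (ball (0::'a) r)) * morrey_norm p \<phi> w (\<lambda>x. ennreal \<bar>f x\<bar>)"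
proof -
  define N where "N = morrey_norm p \<phi> w (\<lambda>x. ennreal (indicator (ball 0 r) x))"
  define D where "D = morrey_dual_norm p \<phi> w (indicator (ball (0::'a) r))"
  define R where "R = A0_const p \<phi> w * ennreal (measure lebesgue (ball (0::'a) r))"
  define I where "I g = (\<integral>\<^sup>+ y\<in>ball 0 r. ennreal \<bar>g y\<bar> \<partial>lebesgue)" for g :: "'a \<Rightarrow> real"
  define nf where "nf = morrey_norm p \<phi> w (\<lambda>x. ennreal \<bar>f x\<bar>)"
  have ND: "N * D \<le> R" unfolding N_def D_def R_def using A0_ge[OF r] .
  have Rfin: "R < top" unfolding R_def using A0fin by (simp add: ennreal_mult_less_top)
  have fm[measurable]: "f \<in> borel_measurable lebesgue" using f by (simp add: in_morrey_def)
  have nffin: "nf < top" using f by (simp add: in_morrey_def nf_def)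
  have Iscale: "I (\<lambda>x. c * f x) = ennreal c * I f" if c: "c \<ge> 0" for c
  proof -
    have "I (\<lambda>x. c * f x) = (\<integral>\<^sup>+ y. ennreal c * (ennreal \<bar>f y\<bar> * indicator (ball 0 r) y) \<partial>lebesgue)"
      unfolding I_def using c by (intro nn_integral_cong) (simp add: ennreal_abs_cmult mult.assoc)
    also have "\<dots> = ennreal c * I f"
      unfolding I_def by (rule nn_integral_cmult) measurable
    finally show ?thesis .
  qed
  have Dge: "I (\<lambda>x. c * f x) \<le> D" if c: "c \<ge> 0" "ennreal c * nf \<le> 1" for c
    unfolding I_def D_def
    by (rule dual_ge) (use in_morrey_scale[OF c(1) f] c(2) in \<open>auto simp: nf_def\<close>)
  show ?thesis
  proof (cases "nf = 0")
    case True
    have bound: "ennreal c * (N * I f) \<le> R" if c: "c > 0" for c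
    proof -
      have "ennreal c * (N * I f) = N * I (\<lambda>x. c * f x)" using c by (simp add: Iscale mult.left_commute)
      also have "\<dots> \<le> N * D" using Dge[of c] c True by (intro mult_left_mono) auto
      finally show ?thesis using ND by simp
    qed
    have "N * I f = 0"
    proof (rule ccontr)
      assume ne: "N * I f \<noteq> 0"
      have "N * I f \<le> R" using bound[of 1] by simp
      then have "N * I f < top" using Rfin by simp
      then obtain y where y: "N * I f = ennreal y" "y > 0" using ne
        by (metis ennreal_cases ennreal_less_zero_iff less_top not_gr_zero order_less_imp_not_less)
      obtain k where k: "R = ennreal k" "k \<ge> 0" using Rfin by (metis ennreal_cases less_top)
      have "ennreal ((k + 1) / y) * ennreal y \<le> ennreal k"
        using bound[of "(k+1)/y"] y k by (simp add: mult.commute)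
      then have "(k + 1) / y * y \<le> k" using y k by (simp add: ennreal_mult[symmetric])
      then show False using y by simp
    qed
    then show ?thesis unfolding N_def I_def by (simp del: mult_eq_0_iff)
  next
    case False
    obtain a where a: "nf = ennreal a" "a > 0" using False nffin
      by (metis ennreal_cases ennreal_eq_0_iff less_top not_less)
    have "ennreal (1/a) * nf = 1" using a by (simp add: ennreal_mult[symmetric])
    then have "I (\<lambda>x. (1/a) * f x) \<le> D" using Dge[of "1/a"] a by simp
    moreover have "I f = ennreal a * I (\<lambda>x. (1/a) * f x)"
    proof -
      have "ennreal a * I (\<lambda>x. (1/a) * f x) = ennreal a * (ennreal (1/a) * I f)"
        using a by (subst Iscale) auto
      also have "\<dots> = I f" using a by (simp add: ennreal_mult[symmetric] mult.assoc[symmetric])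
      finally show ?thesis by simp
    qed
    ultimately have "N * I f \<le> ennreal a * (N * D)"
      by (simp add: mult.left_commute mult_left_mono)
    also have "\<dots> \<le> ennreal a * R" using ND by (intro mult_left_mono) auto
    finally show ?thesis unfolding N_def I_def R_def nf_def[symmetric] a(1) by (simp add: mult.commute mult.left_commute)
  qed
qed

lemma M0_point:
  assumes A0fin: "A0_const p \<phi> w < top" and f: "in_morrey p \<phi> w f"
    and rho: "\<rho> > 0" "\<rho> \<le> 2 * norm x" and E': "is_ball E'" and E: "E \<subseteq> E' \<inter> ball 0 \<rho>"
  shows "M0 f x * epowr (ennreal (1 / \<phi> E') * (\<integral>\<^sup>+ y\<in>E. ennreal (w y) \<partial>lebesgue)) (1 / p)
    \<le> ennreal (2 ^ DIM('a)) * A0_const p \<phi> w * morrey_norm p \<phi> w (\<lambda>x. ennreal \<bar>f x\<bar>)"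
proof -
  define X where "X = epowr (ennreal (1 / \<phi> E') * (\<integral>\<^sup>+ y\<in>E. ennreal (w y) \<partial>lebesgue)) (1 / p)"
  define V where "V r = measure lebesgue (ball (0::'a) r)" for r
  define I where "I r = (\<integral>\<^sup>+ y\<in>ball (0::'a) r. ennreal \<bar>f y\<bar> \<partial>lebesgue)" for r
  define N where "N r = morrey_norm p \<phi> w (\<lambda>x. ennreal (indicator (ball (0::'a) r) x))" for r
  define A where "A = A0_const p \<phi> w"
  define nf where "nf = morrey_norm p \<phi> w (\<lambda>x. ennreal \<bar>f x\<bar>)"
  have V_nonneg: "V r \<ge> 0" for r unfolding V_def by simp
  have "ennreal (1 / V r) * I r * X \<le> ennreal (2 ^ DIM('a)) * A * nf" if r: "r > norm x" for r
  proof -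
    define r' where "r' = max r \<rho>"
    have rpos: "r > 0" using r rho by (smt (verit) norm_ge_zero)
    have r'pos: "r' > 0" and rr': "r \<le> r'" and r'2: "r' \<le> 2 * r" and rhor': "\<rho> \<le> r'"
      using rpos r rho unfolding r'_def by auto
    have Vpos: "V r > 0" "V r' > 0" unfolding V_def using rpos r'pos by (auto intro: vol_ball_pos)
    have V_eq: "V s = s ^ DIM('a) * V 1" if "s \<ge> 0" for s
      unfolding V_def using that by (rule vol_ball_eq)
    have V1: "V 1 > 0" unfolding V_def by (rule vol_ball_pos) simp
    have "V r' = r' ^ DIM('a) * V 1" using V_eq[of r'] r'pos by simp
    also have "\<dots> \<le> (2 * r) ^ DIM('a) * V 1"
      using r'2 r'pos V1 by (intro mult_right_mono power_mono) auto
    also have "\<dots> = 2 ^ DIM('a) * V r" using rpos V_eq[of r] by (simp add: power_mult_distrib)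
    finally have Vr': "V r' \<le> 2 ^ DIM('a) * V r" .
    have "1 / V r = 2 ^ DIM('a) / (2 ^ DIM('a) * V r)" using Vpos by simp
    also have "\<dots> \<le> 2 ^ DIM('a) / V r'"
      using Vr' Vpos by (intro divide_left_mono) auto
    finally have "1 / V r \<le> 2 ^ DIM('a) / V r'" .
    moreover have "I r \<le> I r'"
      unfolding I_def using rr' by (intro nn_set_integral_set_mono) auto
    ultimately have avg: "ennreal (1 / V r) * I r \<le> ennreal (2 ^ DIM('a) / V r') * I r'"
      by (intro mult_mono ennreal_leI) auto
    have "(\<integral>\<^sup>+ y\<in>E. ennreal (w y) \<partial>lebesgue) \<le> (\<integral>\<^sup>+ y\<in>E' \<inter> ball 0 r'. ennreal (w y) \<partial>lebesgue)"
      using E rhor' by (intro nn_set_integral_set_mono) auto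
    also have "\<dots> = wint p w (\<lambda>x. ennreal (indicator (ball 0 r') x)) E'"
      by (simp add: wint_indicator p0)
    finally have "X \<le> epowr (ennreal (1 / \<phi> E') * wint p w (\<lambda>x. ennreal (indicator (ball 0 r') x)) E') (1 / p)"
      unfolding X_def using p0 by (intro epowr_mono mult_left_mono) auto
    also have "\<dots> \<le> N r'" unfolding N_def using E' by (rule norm_ge)
    finally have XN: "X \<le> N r'" .
    have V_nonneg: "V r \<ge> 0" for r unfolding V_def by simp
  have "ennreal (1 / V r) * I r * X \<le> ennreal (2 ^ DIM('a) / V r') * I r' * N r'"
      by (rule mult_mono[OF avg XN]) auto
    also have "\<dots> = ennreal (2 ^ DIM('a) / V r') * (N r' * I r')" by (simp add: mult_ac)
    also have "\<dots> \<le> ennreal (2 ^ DIM('a) / V r') * (A * ennreal (V r') * nf)"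
      unfolding N_def I_def A_def V_def nf_def using key_avg[OF A0fin f r'pos] by (intro mult_left_mono) auto
    also have "\<dots> = (ennreal (2 ^ DIM('a) / V r') * ennreal (V r')) * A * nf" by (simp add: mult_ac)
    also have "ennreal (2 ^ DIM('a) / V r') * ennreal (V r') = ennreal (2 ^ DIM('a))"
      using Vpos by (simp add: ennreal_mult[symmetric])
    finally show ?thesis .
  qed
  then have "M0 f x * X \<le> ennreal (2 ^ DIM('a)) * A * nf"
    unfolding M0_def SUP_mult_right_ennreal V_def I_def by (intro SUP_least) auto
  then show ?thesis unfolding X_def A_def nf_def .
qed

lemma M0_region:
  assumes A0fin: "A0_const p \<phi> w < top" and f: "in_morrey p \<phi> w f"
    and rho: "\<rho> > 0" and E': "is_ball E'" and Em[measurable]: "E \<in> sets lebesgue"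
    and E: "E \<subseteq> E' \<inter> ball 0 \<rho>" and Ex: "\<And>x. x \<in> E \<Longrightarrow> \<rho> \<le> 2 * norm x"
  shows "wint p w (M0 f) E \<le> epowr (ennreal (2 ^ DIM('a)) * A0_const p \<phi> w * morrey_norm p \<phi> w (\<lambda>x. ennreal \<bar>f x\<bar>)) p * ennreal (\<phi> E')"
proof -
  define W where "W = (\<integral>\<^sup>+ y\<in>E. ennreal (w y) \<partial>lebesgue)"
  define Y where "Y = ennreal (1 / \<phi> E') * W"
  define Kp where "Kp = epowr (ennreal (2 ^ DIM('a)) * A0_const p \<phi> w * morrey_norm p \<phi> w (\<lambda>x. ennreal \<bar>f x\<bar>)) p"
  define S where "S = (SUP x\<in>E. epowr (M0 f x) p)"
  have pt: "epowr (M0 f x) p * Y \<le> Kp" if x: "x \<in> E" for x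
  proof -
    have "M0 f x * epowr Y (1/p) \<le> ennreal (2 ^ DIM('a)) * A0_const p \<phi> w * morrey_norm p \<phi> w (\<lambda>x. ennreal \<bar>f x\<bar>)"
      unfolding Y_def W_def using M0_point[OF A0fin f rho Ex[OF x] E' E] .
    then have "epowr (M0 f x * epowr Y (1/p)) p \<le> Kp" unfolding Kp_def using p0 by (intro epowr_mono)
    then show ?thesis using p0 by (simp add: epowr_mult epowr_inv2)
  qed
  have SY: "S * Y \<le> Kp" unfolding S_def SUP_mult_right_ennreal using pt by (intro SUP_least) auto
  have "wint p w (M0 f) E \<le> (\<integral>\<^sup>+ x. S * (ennreal (w x) * indicator E x) \<partial>lebesgue)"
    unfolding wint_def
  proof (intro nn_integral_mono)
    fix x
    show "epowr (M0 f x) p * ennreal (w x) * indicator E x \<le> S * (ennreal (w x) * indicator E x)"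
    proof (cases "x \<in> E")
      case True
      then have "epowr (M0 f x) p \<le> S" unfolding S_def by (intro SUP_upper)
      then show ?thesis using True by (simp add: mult_right_mono)
    qed simp
  qed
  also have "\<dots> = S * W" unfolding W_def by (rule nn_integral_cmult) measurable
  also have "W = Y * ennreal (\<phi> E')"
    unfolding Y_def using phipos[OF E'] by (simp add: mult_ac ennreal_mult[symmetric])
  also have "S * (Y * ennreal (\<phi> E')) \<le> Kp * ennreal (\<phi> E')"
    using SY by (simp add: mult.assoc[symmetric] mult_right_mono)
  finally show ?thesis unfolding Kp_def .
qed

lemma case_far:
  assumes A0fin: "A0_const p \<phi> w < top" and f: "in_morrey p \<phi> w f"
    and R: "R > 0" and c: "norm c \<ge> 3 * R"
  shows "wint p w (M0 f) (ball c R) \<le> epowr (ennreal (2 ^ DIM('a)) * A0_const p \<phi> w * morrey_norm p \<phi> w (\<lambda>x. ennreal \<bar>f x\<bar>)) p * ennreal (\<phi> (ball c R))"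
proof (rule M0_region[OF A0fin f])
  show "norm c + R > 0" using R by (smt (verit) norm_ge_zero)
  show "is_ball (ball c R)" using R by (auto simp: is_ball_def)
  show "ball c R \<in> sets lebesgue" by measurable
  show "ball c R \<subseteq> ball c R \<inter> ball 0 (norm c + R)"
  proof
    fix y assume "y \<in> ball c R"
    then have "norm (y - c) < R" by (simp add: dist_norm norm_minus_commute)
    then have "norm y < norm c + R" by (smt (verit) norm_triangle_ineq2 norm_minus_commute)
    then show "y \<in> ball c R \<inter> ball 0 (norm c + R)" using \<open>y \<in> ball c R\<close> by simp
  qed
  fix x assume "x \<in> ball c R"
  then have "norm (x - c) < R" by (simp add: dist_norm norm_minus_commute)
  then have "norm x > norm c - R" by (smt (verit) norm_triangle_ineq2 norm_minus_commute)
  then show "norm c + R \<le> 2 * norm x" using c by linarith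
qed

lemma case_near:
  assumes A0fin: "A0_const p \<phi> w < top" and f: "in_morrey p \<phi> w f"
    and R: "R > 0" and c: "norm c < 3 * R"
    and Cd: "\<And>x r. r > 0 \<Longrightarrow> \<phi> (ball x (2 * r)) \<le> Cd * \<phi> (ball x r)"
    and del: "\<delta> > 0"
    and Cr: "\<And>B1 B2. is_ball B1 \<Longrightarrow> is_ball B2 \<Longrightarrow> B1 \<subseteq> B2 \<Longrightarrow>
          \<phi> B1 / \<phi> B2 \<le> Cr * (measure lebesgue B1 / measure lebesgue B2) powr \<delta>"
  shows "wint p w (M0 f) (ball c R) \<le> epowr (ennreal (2 ^ DIM('a)) * A0_const p \<phi> w * morrey_norm p \<phi> w (\<lambda>x. ennreal \<bar>f x\<bar>)) p
     * ennreal (Cr * (Cr * Cd ^ 3) / (1 - ((1/2) ^ DIM('a)) powr \<delta>)) * ennreal (\<phi> (ball c R))"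
proof -
  define Kp where "Kp = epowr (ennreal (2 ^ DIM('a)) * A0_const p \<phi> w * morrey_norm p \<phi> w (\<lambda>x. ennreal \<bar>f x\<bar>)) p"
  define q where "q = ((1/2::real) ^ DIM('a)) powr \<delta>"
  define rho where "rho k = 4 * R / 2 ^ k" for k :: nat
  define An where "An k = ball (0::'a) (rho k) - ball 0 (rho k / 2)" for k
  define g where "g x = epowr (M0 f x) p * ennreal (w x)" for x
  have g_meas[measurable]: "g \<in> borel_measurable lebesgue" unfolding g_def by measurable
  have rhopos: "rho k > 0" for k unfolding rho_def using R by simp
  have rhoSuc: "rho (Suc k) = rho k / 2" for k unfolding rho_def by simp
  have An_meas[measurable]: "An k \<in> sets lebesgue" for k unfolding An_def by measurable
  have rho_mono: "rho l \<le> rho (Suc k)" if "k < l" for k l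
  proof -
    have "(2::real) ^ Suc k \<le> 2 ^ l" using that by (intro power_increasing) auto
    then show ?thesis unfolding rho_def using R by (intro divide_left_mono) auto
  qed
  have rho_le: "rho k \<le> 4 * R" for k unfolding rho_def using R by (simp add: field_simps)
  have disj: "disjoint_family An"
    unfolding disjoint_family_on_def
  proof (intro ballI impI)
    fix k l :: nat assume "k \<noteq> l"
    then consider "k < l" | "l < k" by linarith
    then show "An k \<inter> An l = {}"
    proof cases
      case 1 then show ?thesis using rho_mono[OF 1] unfolding An_def rhoSuc by auto
    next
      case 2 then show ?thesis using rho_mono[OF 2] unfolding An_def rhoSuc by auto
    qed
  qed
  have cover: "x \<in> ball 0 (4 * R) \<longleftrightarrow> x \<in> (\<Union>k. An k)" if x0: "x \<noteq> 0" for x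
  proof
    assume x: "x \<in> ball 0 (4 * R)"
    have nx: "norm x > 0" using x0 by simp
    obtain n where n0: "4 * R / (2 * norm x) < 2 ^ n"
      using real_arch_pow[of "2::real" "4 * R / (2 * norm x)"] by auto
    have "4 * R < 2 ^ n * (2 * norm x)" using n0 nx by (simp add: pos_divide_less_eq mult.commute)
    then have n: "rho n < 2 * norm x" unfolding rho_def by (simp add: pos_divide_less_eq mult.commute)
    define k where "k = (LEAST k. rho k \<le> 2 * norm x)"
    have k1: "rho k \<le> 2 * norm x" unfolding k_def by (rule LeastI[where P="\<lambda>k. rho k \<le> 2 * norm x" and k=n]) (use n in simp)
    have "norm x < rho k"
    proof (cases k)
      case 0 then show ?thesis using x by (simp add: rho_def)
    next
      case (Suc j)
      then have "j < k" by simp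
      then have "\<not> rho j \<le> 2 * norm x" unfolding k_def by (rule not_less_Least)
      then show ?thesis using Suc rhoSuc[of j] by simp
    qed
    then have "x \<in> An k" using k1 unfolding An_def by auto
    then show "x \<in> (\<Union>k. An k)" by blast
  next
    assume "x \<in> (\<Union>k. An k)"
    then obtain k where "x \<in> An k" by blast
    moreover have "rho k \<le> 4 * R"
      unfolding rho_def using R by (simp add: field_simps)
    ultimately show "x \<in> ball 0 (4 * R)" unfolding An_def by auto
  qed
  have "wint p w (M0 f) (ball c R) \<le> wint p w (M0 f) (ball 0 (4 * R))"
    unfolding wint_def
  proof (intro nn_set_integral_set_mono subsetI)
    fix y assume "y \<in> ball c R"
    then have "norm (y - c) < R" by (simp add: dist_norm norm_minus_commute)
    then have "norm y < 4 * R" using c by (smt (verit) norm_triangle_ineq2 norm_minus_commute)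
    then show "y \<in> ball 0 (4 * R)" by simp
  qed
  also have "wint p w (M0 f) (ball 0 (4 * R)) = (\<integral>\<^sup>+ x\<in>(\<Union>k. An k). g x \<partial>lebesgue)"
    unfolding wint_def g_def
    by (intro nn_integral_cong_AE, use AE_lebesgue_ne[of 0] in eventually_elim)
       (use cover in \<open>auto split: split_indicator\<close>)
  also have "\<dots> = (\<Sum>k. (\<integral>\<^sup>+ x\<in>An k. g x \<partial>lebesgue))"
    by (rule nn_integral_disjoint_family) (auto simp: disj)
  also have "\<dots> \<le> (\<Sum>k. Kp * ennreal (\<phi> (ball 0 (rho k))))"
  proof (intro suminf_le summableI)
    fix k
    show "(\<integral>\<^sup>+ x\<in>An k. g x \<partial>lebesgue) \<le> Kp * ennreal (\<phi> (ball 0 (rho k)))"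
      unfolding g_def Kp_def wint_def[symmetric]
    proof (rule M0_region[OF A0fin f rhopos])
      show "is_ball (ball 0 (rho k))" using rhopos by auto
      show "An k \<subseteq> ball 0 (rho k) \<inter> ball 0 (rho k)" unfolding An_def by auto
      fix x assume "x \<in> An k" then show "rho k \<le> 2 * norm x" unfolding An_def by auto
    qed simp
  qed
  also have "\<dots> = Kp * (\<Sum>k. ennreal (\<phi> (ball 0 (rho k))))" by (rule ennreal_suminf_cmult)
  finally have step1: "wint p w (M0 f) (ball c R) \<le> Kp * (\<Sum>k. ennreal (\<phi> (ball 0 (rho k))))" .
  define phi0 where "phi0 = \<phi> (ball (0::'a) (4 * R))"
  have phi0pos: "phi0 > 0" unfolding phi0_def using R by (intro phipos) auto
  have q01: "0 < q" "q < 1"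
  proof -
    have h: "0 < (1/2::real) ^ DIM('a)" "(1/2::real) ^ DIM('a) < 1"
      by (auto intro: power_less_one_iff[THEN iffD2])
    show "0 < q" unfolding q_def using h by simp
    show "q < 1" unfolding q_def using h del by (simp add: powr01_less_one)
  qed
  have phik: "\<phi> (ball 0 (rho k)) \<le> Cr * phi0 * q ^ k" for k
  proof -
    have sub: "ball (0::'a) (rho k) \<subseteq> ball 0 (4 * R)"
      by (rule subset_ball) (rule rho_le)
    have "measure lebesgue (ball (0::'a) (rho k)) / measure lebesgue (ball (0::'a) (4 * R)) = ((1/2) ^ DIM('a)) ^ k"
    proof -
      define U where "U = measure lebesgue (ball (0::'a) 1)"
      have U: "U > 0" unfolding U_def by (rule vol_ball_pos) simp
      have e1: "measure lebesgue (ball (0::'a) (rho k)) = rho k ^ DIM('a) * U"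
        unfolding U_def by (rule vol_ball_eq) (use rhopos[of k] in simp)
      have e2: "measure lebesgue (ball (0::'a) (4 * R)) = (4 * R) ^ DIM('a) * U"
        unfolding U_def by (rule vol_ball_eq) (use R in simp)
      have e3: "rho k / (4 * R) = (1/2) ^ k" unfolding rho_def using R by (simp add: power_one_over)
      have "rho k ^ DIM('a) * U / ((4 * R) ^ DIM('a) * U) = (rho k / (4 * R)) ^ DIM('a)"
        using U by (simp add: power_divide)
      also have "\<dots> = ((1/2) ^ DIM('a)) ^ k" unfolding e3 by (simp add: power_mult[symmetric] mult.commute)
      finally show ?thesis unfolding e1 e2 .
    qed
    then have "\<phi> (ball 0 (rho k)) / phi0 \<le> Cr * (((1/2) ^ DIM('a)) ^ k) powr \<delta>"
      using Cr[OF _ _ sub] rhopos[of k] R unfolding phi0_def by simp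
    also have "(((1/2::real) ^ DIM('a)) ^ k) powr \<delta> = q ^ k" unfolding q_def by (rule pow_powr) simp
    finally show ?thesis using phi0pos by (simp add: field_simps)
  qed
  have Crpos: "Cr > 0"
  proof -
    have "0 < \<phi> (ball 0 (rho 0)) / phi0" using phipos[of "ball 0 (rho 0)"] rhopos phi0pos by auto
    also have "\<phi> (ball 0 (rho 0)) / phi0 \<le> Cr" using phik[of 0] phi0pos by (simp add: field_simps)
    finally show ?thesis .
  qed
  have "(\<Sum>k. ennreal (\<phi> (ball 0 (rho k)))) \<le> (\<Sum>k. ennreal (Cr * phi0 * q ^ k))"
    by (intro suminf_le summableI ennreal_leI phik)
  also have "\<dots> = ennreal (Cr * phi0 * (1 / (1 - q)))"
    using q01 Crpos phi0pos by (intro suminf_ennreal_eq sums_mult geometric_sums) auto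
  finally have step2: "(\<Sum>k. ennreal (\<phi> (ball 0 (rho k)))) \<le> ennreal (Cr * phi0 / (1 - q))" by simp
  have Cdpos: "Cd > 0"
  proof -
    have "0 < \<phi> (ball c (2 * R))" using R by (intro phipos) auto
    also have "\<dots> \<le> Cd * \<phi> (ball c R)" using Cd R by simp
    finally show ?thesis using phipos[of "ball c R"] R by (auto simp: zero_less_mult_iff)
  qed
  have phi0le: "phi0 \<le> Cr * \<phi> (ball c (8 * R))"
  proof -
    have sub: "ball (0::'a) (4 * R) \<subseteq> ball c (8 * R)"
    proof
      fix y :: 'a assume "y \<in> ball 0 (4 * R)"
      then have "norm y < 4 * R" by simp
      moreover have "norm (c - y) \<le> norm c + norm y" by (rule norm_triangle_ineq4)
      ultimately have "norm (c - y) < 8 * R" using c R by linarith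
      then show "y \<in> ball c (8 * R)" by (simp add: dist_norm)
    qed
    have "measure lebesgue (ball (0::'a) (4 * R)) \<le> measure lebesgue (ball c (8 * R))"
      using sub by (intro measure_mono_fmeasurable) (auto simp: lmeasurable_ball)
    then have rat: "measure lebesgue (ball (0::'a) (4 * R)) / measure lebesgue (ball c (8 * R)) \<le> 1"
      using vol_ball_pos[of "8*R" c] R by simp
    have "phi0 / \<phi> (ball c (8 * R)) \<le> Cr * (measure lebesgue (ball (0::'a) (4 * R)) / measure lebesgue (ball c (8 * R))) powr \<delta>"
      unfolding phi0_def using Cr[OF _ _ sub] R by auto
    also have "\<dots> \<le> Cr * 1"
      using rat Crpos del by (intro mult_left_mono powr_le1) auto
    finally show ?thesis using phipos[of "ball c (8 * R)"] R by (auto simp: field_simps)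
  qed
  have "\<phi> (ball c (8 * R)) \<le> Cd ^ 3 * \<phi> (ball c R)"
  proof -
    have d1: "\<phi> (ball c (8*R)) \<le> Cd * \<phi> (ball c (4*R))" using Cd[of "4*R" c] R by simp
    have d2: "\<phi> (ball c (4*R)) \<le> Cd * \<phi> (ball c (2*R))" using Cd[of "2*R" c] R by simp
    have d3: "\<phi> (ball c (2*R)) \<le> Cd * \<phi> (ball c R)" using Cd[of R c] R by simp
    have "\<phi> (ball c (8*R)) \<le> Cd * (Cd * \<phi> (ball c (2*R)))"
      using d1 mult_left_mono[OF d2, of Cd] Cdpos by linarith
    also have "\<dots> \<le> Cd * (Cd * (Cd * \<phi> (ball c R)))"
      using d3 Cdpos by (intro mult_left_mono) auto
    finally show ?thesis by (simp add: power3_eq_cube mult_ac)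
  qed
  then have "Cr * \<phi> (ball c (8 * R)) \<le> Cr * (Cd ^ 3 * \<phi> (ball c R))"
    using Crpos by (intro mult_left_mono) auto
  then have phi0le2: "phi0 \<le> Cr * (Cd ^ 3 * \<phi> (ball c R))" using phi0le by linarith
  define C1 where "C1 = Cr * (Cr * Cd ^ 3) / (1 - q)"
  have C1nn: "C1 \<ge> 0" unfolding C1_def using Crpos Cdpos q01 by simp
  have "Cr * phi0 \<le> Cr * (Cr * (Cd ^ 3 * \<phi> (ball c R)))"
    using phi0le2 Crpos by (intro mult_left_mono) auto
  then have "Cr * phi0 / (1 - q) \<le> Cr * (Cr * (Cd ^ 3 * \<phi> (ball c R))) / (1 - q)"
    using q01 by (intro divide_right_mono) auto
  also have "\<dots> = C1 * \<phi> (ball c R)" unfolding C1_def by (simp add: mult_ac)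
  finally have "ennreal (Cr * phi0 / (1 - q)) \<le> ennreal (C1 * \<phi> (ball c R))" by (rule ennreal_leI)
  also have "\<dots> = ennreal C1 * ennreal (\<phi> (ball c R))"
    using C1nn phipos[of "ball c R"] R by (simp add: ennreal_mult)
  finally have "(\<Sum>k. ennreal (\<phi> (ball 0 (rho k)))) \<le> ennreal C1 * ennreal (\<phi> (ball c R))"
    using step2 by (rule order_trans[rotated])
  then have "Kp * (\<Sum>k. ennreal (\<phi> (ball 0 (rho k)))) \<le> Kp * (ennreal C1 * ennreal (\<phi> (ball c R)))"
    by (rule mult_left_mono) simp
  with step1 have "wint p w (M0 f) (ball c R) \<le> Kp * (ennreal C1 * ennreal (\<phi> (ball c R)))"
    by (rule order_trans)
  then show ?thesis unfolding Kp_def C1_def q_def by (simp add: mult.assoc)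
qed

lemma phi_pow:
  assumes "c > 0"
  shows "epowr (ennreal (1 / c)) (1 / p) = ennreal (c powr (- 1 / p))"
proof -
  have "(1 / c) powr (1 / p) = c powr (- 1 / p)"
    using assms by (simp add: powr_divide powr_minus_divide)
  then show ?thesis using assms by (simp add: epowr_ennreal)
qed

lemma weak_le_strong:
  assumes g[measurable]: "g \<in> borel_measurable lebesgue"
  shows "weak_morrey_norm p \<phi> w g \<le> morrey_norm p \<phi> w g"
  unfolding weak_morrey_norm_def
proof (intro SUP_least, clarify)
  fix B :: "'a set" and t :: real assume B: "is_ball B" and t: "t > 0"
  have Bm[measurable]: "B \<in> sets lebesgue" using B by (rule ball_sets_lebesgue)
  define W where "W = (\<integral>\<^sup>+ x\<in>{x\<in>B. g x > ennreal t}. ennreal (w x) \<partial>lebesgue)"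
  have phB: "\<phi> B > 0" using phipos[OF B] .
  have tt: "epowr (ennreal (t powr p)) (1/p) = ennreal t"
    using t p0 by (simp add: epowr_ennreal powr_powr)
  have "ennreal t * epowr W (1 / p) * ennreal (\<phi> B powr (- 1 / p)) =
      epowr (ennreal (t powr p) * W * ennreal (1 / \<phi> B)) (1 / p)"
    using p0 phB by (simp add: epowr_mult tt phi_pow)
  also have "\<dots> \<le> epowr (ennreal (1 / \<phi> B) * wint p w g B) (1 / p)"
  proof (intro epowr_mono)
    show "0 < 1 / p" using p0 by simp
    have "ennreal (t powr p) * W = (\<integral>\<^sup>+ x. ennreal (t powr p) * (ennreal (w x) * indicator {x\<in>B. g x > ennreal t} x) \<partial>lebesgue)"
      unfolding W_def by (rule nn_integral_cmult[symmetric]) measurable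
    also have "\<dots> \<le> wint p w g B"
      unfolding wint_def
    proof (intro nn_integral_mono)
      fix x
      show "ennreal (t powr p) * (ennreal (w x) * indicator {x\<in>B. g x > ennreal t} x) \<le> epowr (g x) p * ennreal (w x) * indicator B x"
      proof (cases "x \<in> B \<and> g x > ennreal t")
        case True
        then have "epowr (ennreal t) p \<le> epowr (g x) p" using p0 by (intro epowr_mono) auto
        then have "ennreal (t powr p) \<le> epowr (g x) p" using t by (simp add: epowr_ennreal)
        then show ?thesis using True by (simp add: mult_right_mono)
      qed (auto split: split_indicator)
    qed
    finally have X: "ennreal (t powr p) * W \<le> wint p w g B" .
    show "ennreal (t powr p) * W * ennreal (1 / \<phi> B) \<le> ennreal (1 / \<phi> B) * wint p w g B"
      using mult_right_mono[OF X, of "ennreal (1 / \<phi> B)"] by (simp add: mult.commute)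
  qed
  also have "\<dots> \<le> morrey_norm p \<phi> w g" using B by (rule norm_ge)
  finally show "ennreal t * epowr W (1 / p) * ennreal (\<phi> B powr (- 1 / p)) \<le> morrey_norm p \<phi> w g" .
qed

lemma A0_le:
  assumes K: "\<And>f. in_morrey p \<phi> w f \<Longrightarrow>
      weak_morrey_norm p \<phi> w (M0 f) \<le> K * morrey_norm p \<phi> w (\<lambda>x. ennreal \<bar>f x\<bar>)"
  shows "A0_const p \<phi> w \<le> K"
  unfolding A0_const_def
proof (intro SUP_least, clarify)
  fix r :: real assume r: "r > 0"
  define N where "N = morrey_norm p \<phi> w (\<lambda>x. ennreal (indicator (ball (0::'a) r) x))"
  define V where "V = measure lebesgue (ball (0::'a) r)"
  have Vpos: "V > 0" unfolding V_def using r by (rule vol_ball_pos)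
  have "N * (SUP f\<in>{f. in_morrey p \<phi> w f \<and> morrey_norm p \<phi> w (\<lambda>x. ennreal \<bar>f x\<bar>) \<le> 1}.
      \<integral>\<^sup>+ x. ennreal \<bar>f x * indicator (ball 0 r) x\<bar> \<partial>lebesgue) / ennreal V \<le> K"
    unfolding SUP_mult_left_ennreal SUP_divide_ennreal
  proof (intro SUP_least, clarify)
    fix f assume f: "in_morrey p \<phi> w f" and nf: "morrey_norm p \<phi> w (\<lambda>x. ennreal \<bar>f x\<bar>) \<le> 1"
    define I where "I = (\<integral>\<^sup>+ y\<in>ball 0 r. ennreal \<bar>f y\<bar> \<partial>lebesgue)"
    define t where "t = ennreal (1 / V) * I"
    have "(\<integral>\<^sup>+ x. ennreal \<bar>f x * indicator (ball 0 r) x\<bar> \<partial>lebesgue) = I"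
      unfolding I_def by (intro nn_integral_cong) (simp add: ennreal_abs_indicator)
    moreover have "N * I / ennreal V = N * t"
      unfolding t_def divide_ennreal_def using Vpos by (simp add: inverse_ennreal mult_ac inverse_eq_divide)
    moreover have M0t: "t \<le> M0 f x" if x: "x \<in> ball 0 r" for x
      unfolding M0_def t_def I_def V_def using x by (intro SUP_upper2[of r]) auto
    have key: "ennreal s * N \<le> K" if s: "s > 0" "ennreal s < t" for s
      unfolding N_def morrey_norm_def SUP_mult_left_ennreal
    proof (intro SUP_least, clarify)
      fix B :: "'a set" assume B: "is_ball B"
      have phB: "\<phi> B > 0" using phipos[OF B] .
      define W where "W = (\<integral>\<^sup>+ x\<in>{x\<in>B. M0 f x > ennreal s}. ennreal (w x) \<partial>lebesgue)"
      have Wle: "(\<integral>\<^sup>+ x\<in>B \<inter> ball 0 r. ennreal (w x) \<partial>lebesgue) \<le> W"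
        unfolding W_def using M0t s(2) by (intro nn_set_integral_set_mono) (auto intro: order.strict_trans2)
      then have "ennreal (1 / \<phi> B) * wint p w (\<lambda>x. ennreal (indicator (ball 0 r) x)) B \<le> W * ennreal (1 / \<phi> B)"
        using mult_right_mono[OF Wle, of "ennreal (1 / \<phi> B)"] by (simp add: wint_indicator p0 mult.commute)
      then have "ennreal s * epowr (ennreal (1 / \<phi> B) * wint p w (\<lambda>x. ennreal (indicator (ball 0 r) x)) B) (1 / p)
          \<le> ennreal s * epowr (W * ennreal (1 / \<phi> B)) (1 / p)"
        using p0 by (intro mult_left_mono epowr_mono) auto
      also have "\<dots> = ennreal s * epowr W (1 / p) * ennreal (\<phi> B powr (- 1 / p))"
        using p0 phB by (simp add: epowr_mult phi_pow mult.assoc)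
      also have "\<dots> \<le> weak_morrey_norm p \<phi> w (M0 f)"
        unfolding weak_morrey_norm_def W_def using B s by (intro SUP_upper2[of "(B, s)"]) auto
      also have "\<dots> \<le> K * morrey_norm p \<phi> w (\<lambda>x. ennreal \<bar>f x\<bar>)" using K[OF f] .
      also have "\<dots> \<le> K * 1" using nf by (intro mult_left_mono) auto
      finally show "ennreal s * epowr (ennreal (1 / \<phi> B) * wint p w (\<lambda>x. ennreal (indicator (ball 0 r) x)) B) (1 / p) \<le> K"
        by simp
    qed
    have "N * t \<le> K"
    proof -
      have "t * N = (SUP y\<in>{..<t}. y) * N" by simp
      also have "\<dots> = (SUP y\<in>{..<t}. y * N)" by (rule SUP_mult_right_ennreal)
      also have "\<dots> \<le> K"
      proof (intro SUP_least)
        fix y assume "y \<in> {..<t}"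
        then have yt: "y < t" by simp
        then have "y \<noteq> top" using top.not_eq_extremum by fastforce
        then obtain s where sy: "y = ennreal s" "s \<ge> 0" by (metis ennreal_cases)
        show "y * N \<le> K"
        proof (cases "s = 0")
          case True then show ?thesis using sy by simp
        next
          case False then show ?thesis using sy yt key[of s] by simp
        qed
      qed
      finally show ?thesis by (simp add: mult.commute)
    qed
    ultimately show "N * (\<integral>\<^sup>+ x. ennreal \<bar>f x * indicator (ball 0 r) x\<bar> \<partial>lebesgue) / ennreal V \<le> K" by simp
  qed
  then show "morrey_norm p \<phi> w (\<lambda>x. ennreal (indicator (ball 0 r) x)) *
          morrey_dual_norm p \<phi> w (indicator (ball 0 r)) / emeasure lebesgue (ball (0::'a) r) \<le> K"
    unfolding morrey_dual_norm_def N_def V_def emeasure_ball_eq .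
qed

lemma strong_bound:
  assumes A0fin: "A0_const p \<phi> w < top" and f: "in_morrey p \<phi> w f"
    and Cd: "\<And>x r. r > 0 \<Longrightarrow> \<phi> (ball x (2 * r)) \<le> Cd * \<phi> (ball x r)"
    and del: "\<delta> > 0"
    and Cr: "\<And>B1 B2. is_ball B1 \<Longrightarrow> is_ball B2 \<Longrightarrow> B1 \<subseteq> B2 \<Longrightarrow>
          \<phi> B1 / \<phi> B2 \<le> Cr * (measure lebesgue B1 / measure lebesgue B2) powr \<delta>"
  shows "morrey_norm p \<phi> w (M0 f) \<le> ennreal ((max 1 (Cr * (Cr * Cd ^ 3) / (1 - ((1/2) ^ DIM('a)) powr \<delta>))) powr (1/p) * 2 ^ DIM('a))
      * A0_const p \<phi> w * morrey_norm p \<phi> w (\<lambda>x. ennreal \<bar>f x\<bar>)"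
proof -
  define C1 where "C1 = Cr * (Cr * Cd ^ 3) / (1 - ((1/2::real) ^ DIM('a)) powr \<delta>)"
  define Ct where "Ct = max 1 C1"
  define Kp where "Kp = epowr (ennreal (2 ^ DIM('a)) * A0_const p \<phi> w * morrey_norm p \<phi> w (\<lambda>x. ennreal \<bar>f x\<bar>)) p"
  have Ct1: "Ct \<ge> 1" unfolding Ct_def by simp
  have "ennreal (Ct powr (1/p) * 2 ^ DIM('a)) * A0_const p \<phi> w * morrey_norm p \<phi> w (\<lambda>x. ennreal \<bar>f x\<bar>)
      = ennreal (Ct powr (1/p)) * (ennreal (2 ^ DIM('a)) * A0_const p \<phi> w * morrey_norm p \<phi> w (\<lambda>x. ennreal \<bar>f x\<bar>))"
    by (simp add: ennreal_mult mult_ac)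
  then have eK: "epowr (ennreal (Ct powr (1/p) * 2 ^ DIM('a)) * A0_const p \<phi> w * morrey_norm p \<phi> w (\<lambda>x. ennreal \<bar>f x\<bar>)) p
      = ennreal Ct * Kp"
    unfolding Kp_def using p0 Ct1 by (simp add: epowr_mult epowr_ennreal powr_powr)
  have Kp_le: "Kp \<le> ennreal Ct * Kp"
  proof -
    have "1 * Kp \<le> ennreal Ct * Kp" using Ct1 by (intro mult_right_mono) auto
    then show ?thesis by simp
  qed
  have "\<forall>B. is_ball B \<longrightarrow> wint p w (M0 f) B \<le> (ennreal Ct * Kp) * ennreal (\<phi> B)"
  proof (intro allI impI)
    fix B :: "'a set" assume "is_ball B"
    then obtain c R where R: "R > 0" and B: "B = ball c R" unfolding is_ball_def by blast
    show "wint p w (M0 f) B \<le> (ennreal Ct * Kp) * ennreal (\<phi> B)"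
    proof (cases "norm c \<ge> 3 * R")
      case True
      have "wint p w (M0 f) B \<le> Kp * ennreal (\<phi> B)"
        unfolding B Kp_def by (rule case_far[OF A0fin f R True])
      also have "\<dots> \<le> (ennreal Ct * Kp) * ennreal (\<phi> B)" using Kp_le by (intro mult_right_mono) auto
      finally show ?thesis .
    next
      case False
      then have c: "norm c < 3 * R" by simp
      have "wint p w (M0 f) B \<le> Kp * ennreal C1 * ennreal (\<phi> B)"
        unfolding B Kp_def C1_def by (rule case_near[OF A0fin f R c Cd del Cr])
      also have "\<dots> \<le> Kp * ennreal Ct * ennreal (\<phi> B)"
        unfolding Ct_def by (intro mult_right_mono mult_left_mono ennreal_leI) auto
      finally show ?thesis by (simp add: mult_ac)
    qed
  qed
  then have "\<forall>B. is_ball B \<longrightarrow> wint p w (M0 f) B \<le> epowr (ennreal (Ct powr (1/p) * 2 ^ DIM('a)) * A0_const p \<phi> w * morrey_norm p \<phi> w (\<lambda>x. ennreal \<bar>f x\<bar>)) p * ennreal (\<phi> B)"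
    unfolding eK .
  then have "morrey_norm p \<phi> w (M0 f) \<le> ennreal (Ct powr (1/p) * 2 ^ DIM('a)) * A0_const p \<phi> w * morrey_norm p \<phi> w (\<lambda>x. ennreal \<bar>f x\<bar>)"
    using norm_le_iff[where \<phi>=\<phi> and w=w and g="M0 f", OF p0 phipos] by (simp only:)
  then show ?thesis unfolding Ct_def C1_def .
qed

end

theorem theorem3p2:
  fixes \<phi> :: "'a::euclidean_space set \<Rightarrow> real" and p :: real
  assumes "1 \<le> p" and "admissible_phi \<phi>"
  shows "\<exists>C::real. C > 0 \<and> (\<forall>w::'a \<Rightarrow> real. weight w \<longrightarrow>
     (\<forall>x r. r > 0 \<longrightarrow> in_morrey p \<phi> w (indicator (ball x r))) \<longrightarrow>
       (M0_bounded_weak p \<phi> w \<longleftrightarrow> in_A0 p \<phi> w) \<and>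
       (in_A0 p \<phi> w \<longleftrightarrow> M0_bounded_strong p \<phi> w) \<and>
       A0_const p \<phi> w \<le> ennreal C * M0_norm_weak p \<phi> w \<and>
       M0_norm_weak p \<phi> w \<le> ennreal C * A0_const p \<phi> w \<and>
       A0_const p \<phi> w \<le> ennreal C * M0_norm_strong p \<phi> w \<and>
       M0_norm_strong p \<phi> w \<le> ennreal C * A0_const p \<phi> w)"
proof -
  note p1 = assms(1)
  note ad = assms(2)[unfolded admissible_phi_def]
  have phipos0: "\<forall>B. is_ball B \<longrightarrow> \<phi> B > 0" using ad by (rule conjunct1)
  have phipos: "\<And>B. is_ball B \<Longrightarrow> \<phi> B > 0" using phipos0 by simp
  have "\<exists>C. \<forall>x r. r > 0 \<longrightarrow> \<phi> (ball x (2 * r)) \<le> C * \<phi> (ball x r)"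
    using ad by (rule conjunct1[OF conjunct2])
  then obtain Cd where Cd0: "\<forall>x r. r > 0 \<longrightarrow> \<phi> (ball x (2 * r)) \<le> Cd * \<phi> (ball x r)" by (elim exE)
  have Cd: "\<And>x r. r > 0 \<Longrightarrow> \<phi> (ball x (2 * r)) \<le> Cd * \<phi> (ball x r)" using Cd0 by simp
  have "\<exists>\<delta> C. \<delta> > 0 \<and> (\<forall>B1 B2. is_ball B1 \<longrightarrow> is_ball B2 \<longrightarrow> B1 \<subseteq> B2 \<longrightarrow>
          \<phi> B1 / \<phi> B2 \<le> C * (measure lebesgue B1 / measure lebesgue B2) powr \<delta>)"
    using ad by (rule conjunct2[OF conjunct2])
  then obtain \<delta> Cr where del: "\<delta> > 0" and Cr0: "\<forall>B1 B2. is_ball B1 \<longrightarrow> is_ball B2 \<longrightarrow> B1 \<subseteq> B2 \<longrightarrow>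
          \<phi> B1 / \<phi> B2 \<le> Cr * (measure lebesgue B1 / measure lebesgue B2) powr \<delta>" by (elim exE conjE)
  have Cr: "\<And>B1 B2. is_ball B1 \<Longrightarrow> is_ball B2 \<Longrightarrow> B1 \<subseteq> B2 \<Longrightarrow>
          \<phi> B1 / \<phi> B2 \<le> Cr * (measure lebesgue B1 / measure lebesgue B2) powr \<delta>" using Cr0 by simp
  define C where "C = (max 1 (Cr * (Cr * Cd ^ 3) / (1 - ((1/2) ^ DIM('a)) powr \<delta>))) powr (1/p) * 2 ^ DIM('a)"
  have C1: "C \<ge> 1"
  proof -
    have X: "(max 1 (Cr * (Cr * Cd ^ 3) / (1 - ((1/2::real) ^ DIM('a)) powr \<delta>))) powr (1/p) \<ge> 1"
      using p1 by (intro ge_one_powr_ge_zero) auto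
    have Y: "(2::real) ^ DIM('a) \<ge> 1" by simp
    have "1 * 1 \<le> (max 1 (Cr * (Cr * Cd ^ 3) / (1 - ((1/2::real) ^ DIM('a)) powr \<delta>))) powr (1/p) * 2 ^ DIM('a)"
      using X Y by (intro mult_mono) auto
    then show ?thesis unfolding C_def by simp
  qed
  have eC1: "1 \<le> ennreal C" using C1 by simp
  have le_C: "x \<le> ennreal C * x" for x :: ennreal
  proof -
    have "1 * x \<le> ennreal C * x" using eC1 by (intro mult_right_mono) auto
    then show ?thesis by simp
  qed
  show ?thesis
  proof (intro exI[of _ C] conjI allI impI)
    show "C > 0" using C1 by simp
    fix w :: "'a \<Rightarrow> real" assume wt: "weight w"
    have strongC: "morrey_norm p \<phi> w (M0 f) \<le> ennreal C * A0_const p \<phi> w * morrey_norm p \<phi> w (\<lambda>x. ennreal \<bar>f x\<bar>)"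
      if "A0_const p \<phi> w < top" "in_morrey p \<phi> w f" for f
      unfolding C_def by (rule strong_bound[where \<phi>=\<phi>, OF p1 phipos wt that Cd del Cr])
    have wk: "weak_morrey_norm p \<phi> w (M0 f) \<le> morrey_norm p \<phi> w (M0 f)" for f
      by (rule weak_le_strong[where \<phi>=\<phi>, OF p1 phipos wt M0_measurable])
    have a: "A0_const p \<phi> w \<le> M0_norm_weak p \<phi> w"
      unfolding M0_norm_weak_def by (intro Inf_greatest) (auto intro: A0_le[where \<phi>=\<phi>, OF p1 phipos wt])
    have b: "M0_norm_weak p \<phi> w \<le> M0_norm_strong p \<phi> w"
      unfolding M0_norm_weak_def M0_norm_strong_def
      by (intro Inf_superset_mono) (auto intro: order_trans[OF wk])
    have c: "M0_norm_strong p \<phi> w \<le> ennreal C * A0_const p \<phi> w"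
    proof (cases "A0_const p \<phi> w < top")
      case True
      show ?thesis unfolding M0_norm_strong_def
        by (rule Inf_lower) (use strongC[OF True] in auto)
    next
      case False
      then have "A0_const p \<phi> w = top" using less_top by blast
      then show ?thesis using C1 by (simp add: ennreal_mult_top)
    qed
    have bs_bw: "M0_bounded_weak p \<phi> w" if "M0_bounded_strong p \<phi> w"
      using that unfolding M0_bounded_strong_def M0_bounded_weak_def by (meson order_trans wk)
    have bw_A: "in_A0 p \<phi> w" if bw: "M0_bounded_weak p \<phi> w"
    proof -
      obtain K :: real where K: "\<And>f. in_morrey p \<phi> w f \<Longrightarrow>
          weak_morrey_norm p \<phi> w (M0 f) \<le> ennreal K * morrey_norm p \<phi> w (\<lambda>x. ennreal \<bar>f x\<bar>)"
        using bw unfolding M0_bounded_weak_def by blast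
      have "A0_const p \<phi> w \<le> ennreal K" by (rule A0_le[where \<phi>=\<phi>, OF p1 phipos wt K])
      then show ?thesis unfolding in_A0_def using le_less_trans by fastforce
    qed
    have A_bs: "M0_bounded_strong p \<phi> w" if "in_A0 p \<phi> w"
    proof -
      have fin: "A0_const p \<phi> w < top" using that by (simp add: in_A0_def)
      have eq: "ennreal (C * enn2real (A0_const p \<phi> w)) = ennreal C * A0_const p \<phi> w"
        using fin C1 by (simp add: ennreal_mult ennreal_enn2real less_top)
      show ?thesis unfolding M0_bounded_strong_def
        by (intro exI[of _ "C * enn2real (A0_const p \<phi> w)"]) (use strongC[OF fin] in \<open>auto simp: eq\<close>)
    qed
    show "M0_bounded_weak p \<phi> w \<longleftrightarrow> in_A0 p \<phi> w" using bw_A A_bs bs_bw by blast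
    show "in_A0 p \<phi> w \<longleftrightarrow> M0_bounded_strong p \<phi> w" using bw_A A_bs bs_bw by blast
    show "A0_const p \<phi> w \<le> ennreal C * M0_norm_weak p \<phi> w" using a le_C order_trans by blast
    show "M0_norm_weak p \<phi> w \<le> ennreal C * A0_const p \<phi> w" using b c by (rule order_trans)
    show "A0_const p \<phi> w \<le> ennreal C * M0_norm_strong p \<phi> w" using a b le_C order_trans by metis
    show "M0_norm_strong p \<phi> w \<le> ennreal C * A0_const p \<phi> w" by (rule c)
  qed
qed

end
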